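(* Let $P\subset\mathbb{R}^2$ be a finite point set of size $n$ satisfying the standing condition, let $X\subseteq P$ be its set of extreme points (given as input), and let $\varepsilon\in(0,1)$. The algorithm E-GRMR described in the context runs in $O(n^3)$ time.
   Context: For finite $Q \subset \mathbb{R}^2$ and unit $x$, $\omega(x,Q)=\max_{p\in Q}\langle p,x\rangle$. Standing condition: $\omega(x,P)>0$ for all $x\in\mathbb{S}^1$. Extreme points $X=\{t_1,\dots,t_m\}$ are the vertices of the convex hull of $P$ (the points that are top-ranked, $\langle p,x\rangle = \omega(x,P)$, for some nonzero $x$), indexed counterclockwise by polar angle, cyclically. Algorithm E-GRMR on input $(P,X,\varepsilon)$: (1) For each $i$, compute the unit vector $x^*_i$ with $\langle t_i,x\rangle=\langle t_{i+1},x\rangle$, $\langle t_i,x\rangle>0$; set $S=X$ and add to $S$ each $p\in P\setminus X$ for which some $i$ has $\langle p,x^*_i\rangle\ge(1-\varepsilon)\langle t_i,x^*_i\rangle$; index $S$ as $s_1,\dots,s_{|S|}$ counterclockwise by polar angle. (2) Build a directed graph $G$ on vertex set $S$: for each ordered pair $i\neq j$, skip if the counterclockwise angle from $s_i$ to $s_j$ is at least $\pi$; otherwise compute $l_{ij}=\max_{t\in X[s_i,s_j]}(1-\langle s_i,x^*\rangle/\langle t,x^*\rangle)$ (taken as $0$ if $X[s_i,s_j]$ is empty), where $X[s_i,s_j]$ is the set of extreme points with polar angle in the counterclockwise range from $s_i$ to $s_j$ inclusive and $x^*$ is the unit vector with $\langle s_i,x^*\rangle=\langle s_j,x^*\rangle$,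 $\langle s_i,x^*\rangle\ge0$; add edge $s_i\to s_j$ if $l_{ij}\le\varepsilon$. (3) Find a shortest directed cycle $C^*$ of $G$ by running Dijkstra's algorithm from each vertex, and return its vertex set. *)

theory Defs
  imports "HOL-Analysis.Analysis" "HOL-Library.Monad_Syntax"
begin

section \<open>Geometry (points of R^2 represented as complex numbers; inner product is \<bullet>)\<close>

definition omega :: "complex \<Rightarrow> complex set \<Rightarrow> real" where
  "omega x Q = Max ((\<lambda>p. p \<bullet> x) ` Q)"

definition standing_condition :: "complex set \<Rightarrow> bool" where
  "standing_condition P \<longleftrightarrow> (\<forall>x. norm x = 1 \<longrightarrow> omega x P > 0)"

definition polar :: "complex \<Rightarrow> real" where
  "polar p = Arg2pi p"

definition ccw_angle :: "complex \<Rightarrow> complex \<Rightarrow> real" where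
  "ccw_angle a b = Arg2pi (b / a)"

definition perp_unit :: "complex \<Rightarrow> complex \<Rightarrow> complex" where
  "perp_unit a b = \<i> * (b - a) / complex_of_real (cmod (b - a))"

definition xstar_strict :: "complex \<Rightarrow> complex \<Rightarrow> complex" where
  "xstar_strict a b = (let u = perp_unit a b in if a \<bullet> u > 0 then u else - u)"

definition xstar_weak :: "complex \<Rightarrow> complex \<Rightarrow> complex" where
  "xstar_weak a b = (let u = perp_unit a b in if a \<bullet> u \<ge> 0 then u else - u)"

text \<open>A computation returns a value together with the number of elementary steps used.
  prim v is one elementary (constant-size) operation producing v (an arithmetic /
  comparison / sqrt / arg evaluation, or one array read or write); every loop
  iteration additionally costs one step.\<close>

type_synonym 'a tm = "'a \<times> nat"

definition ret :: "'a \<Rightarrow> 'a tm" where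
  "ret x = (x, 0)"

definition prim :: "'a \<Rightarrow> 'a tm" where
  "prim x = (x, 1)"

definition tbind :: "'a tm \<Rightarrow> ('a \<Rightarrow> 'b tm) \<Rightarrow> 'b tm" where
  "tbind m f = (case m of (x, c) \<Rightarrow> (case f x of (y, d) \<Rightarrow> (y, c + d)))"

adhoc_overloading Monad_Syntax.bind \<rightleftharpoons> tbind

fun foldM :: "('b \<Rightarrow> 'a \<Rightarrow> 'b tm) \<Rightarrow> 'a list \<Rightarrow> 'b \<Rightarrow> 'b tm" where
  "foldM f [] b = ret b"
| "foldM f (x # xs) b = do { b' \<leftarrow> f b x; b'' \<leftarrow> prim b'; foldM f xs b'' }"

definition forM :: "('a \<Rightarrow> 'b tm) \<Rightarrow> 'a list \<Rightarrow> 'b list tm" where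
  "forM f xs = foldM (\<lambda>acc x. do { y \<leftarrow> f x; ret (acc @ [y]) }) xs []"

definition anyM :: "('a \<Rightarrow> bool tm) \<Rightarrow> 'a list \<Rightarrow> bool tm" where
  "anyM p xs = foldM (\<lambda>b x. if b then ret True else p x) xs False"

fun ins_tm :: "('a \<Rightarrow> real) \<Rightarrow> 'a \<Rightarrow> 'a list \<Rightarrow> 'a list tm" where
  "ins_tm k x [] = ret [x]"
| "ins_tm k x (y # ys) = do {
      b \<leftarrow> prim (k x \<le> k y);
      if b then ret (x # y # ys) else do { r \<leftarrow> ins_tm k x ys; ret (y # r) } }"

definition sort_tm :: "('a \<Rightarrow> real) \<Rightarrow> 'a list \<Rightarrow> 'a list tm" where
  "sort_tm k xs = foldM (\<lambda>acc x. ins_tm k x acc) xs []"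

text \<open>Step (1): returns the extreme points sorted counterclockwise (T) and the
  candidate set S sorted counterclockwise.\<close>
definition step1 :: "complex list \<Rightarrow> complex list \<Rightarrow> real \<Rightarrow> (complex list \<times> complex list) tm" where
  "step1 P X eps = do {
     T \<leftarrow> sort_tm polar X;
     let m = length T;
     xs \<leftarrow> forM (\<lambda>i. prim (xstar_strict (T ! i) (T ! ((i + 1) mod m)))) [0..<m];
     extra \<leftarrow> foldM (\<lambda>acc p. do {
                 inX \<leftarrow> anyM (\<lambda>t. prim (t = p)) T;
                 if inX then ret acc else do {
                   close \<leftarrow> anyM (\<lambda>i. prim (p \<bullet> (xs ! i) \<ge> (1 - eps) * ((T ! i) \<bullet> (xs ! i)))) [0..<m];
                   ret (if close then acc @ [p] else acc) } }) P [];
     S \<leftarrow> sort_tm polar (T @ extra);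
     ret (T, S) }"

text \<open>The quantity l_ij for s_i = a, s_j = b (0 if X[a,b] is empty).\<close>
definition lval_tm :: "complex list \<Rightarrow> complex \<Rightarrow> complex \<Rightarrow> real tm" where
  "lval_tm T a b = do {
     xst \<leftarrow> prim (xstar_weak a b);
     r \<leftarrow> foldM (\<lambda>acc t. do {
             inR \<leftarrow> prim (ccw_angle a t \<le> ccw_angle a b);
             if inR then prim (Some (case acc of
                                  None \<Rightarrow> 1 - (a \<bullet> xst) / (t \<bullet> xst)
                                | Some v \<Rightarrow> max v (1 - (a \<bullet> xst) / (t \<bullet> xst))))
             else ret acc }) T None;
     ret (case r of None \<Rightarrow> 0 | Some v \<Rightarrow> v) }"

definition edge_tm :: "complex list \<Rightarrow> complex list \<Rightarrow> real \<Rightarrow> nat \<Rightarrow> nat \<Rightarrow> bool tm" where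
  "edge_tm T S eps i j = do {
     same \<leftarrow> prim (i = j);
     if same then ret False else do {
       skip \<leftarrow> prim (ccw_angle (S ! i) (S ! j) \<ge> pi);
       if skip then ret False else do {
         l \<leftarrow> lval_tm T (S ! i) (S ! j);
         prim (l \<le> eps) } } }"

definition dijkstra_tm :: "bool list list \<Rightarrow> nat \<Rightarrow> nat \<Rightarrow> (nat option list \<times> nat list) tm" where
  "dijkstra_tm adj k s = do {
     dist0 \<leftarrow> forM (\<lambda>v. prim (if v = s then Some 0 else None)) [0..<k];
     pred0 \<leftarrow> forM (\<lambda>v. prim s) [0..<k];
     vis0 \<leftarrow> forM (\<lambda>v. prim False) [0..<k];
     (dist, pred, vis) \<leftarrow> foldM (\<lambda>(dist, pred, vis) _. do {
         u \<leftarrow> foldM (\<lambda>best v. prim (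
                  if \<not> vis ! v \<and> dist ! v \<noteq> None \<and>
                     (case best of None \<Rightarrow> True | Some w \<Rightarrow> the (dist ! v) < the (dist ! w))
                  then Some v else best)) [0..<k] None;
         (case u of
            None \<Rightarrow> ret (dist, pred, vis)
          | Some u \<Rightarrow> do {
              vis' \<leftarrow> prim (vis[u := True]);
              (dist', pred') \<leftarrow> foldM (\<lambda>(d, pr) v. prim (
                   if adj ! u ! v \<and> \<not> vis' ! v \<and>
                      (case d ! v of None \<Rightarrow> True | Some dv \<Rightarrow> the (d ! u) + 1 < dv)
                   then (d[v := Some (the (d ! u) + 1)], pr[v := u]) else (d, pr))) [0..<k] (dist, pred);
              ret (dist', pred', vis') }) }) [0..<k] (dist0, pred0, vis0);
     ret (dist, pred) }"

text \<open>Step (3): a shortest directed cycle (fewest edges), via Dijkstra from every vertex;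
  returns its vertex indices (empty list if the graph is acyclic).\<close>
definition cycle_tm :: "bool list list \<Rightarrow> nat \<Rightarrow> nat list tm" where
  "cycle_tm adj k = do {
     best \<leftarrow> foldM (\<lambda>best s. do {
                (dist, pred) \<leftarrow> dijkstra_tm adj k s;
                foldM (\<lambda>b v. prim (case dist ! v of
                           None \<Rightarrow> b
                         | Some d \<Rightarrow> if adj ! v ! s \<and> (case b of None \<Rightarrow> True | Some (L, _, _) \<Rightarrow> d + 1 < L)
                                     then Some (d + 1, s, v) else b)) [0..<k] best }) [0..<k] None;
     (case best of
        None \<Rightarrow> ret []
      | Some (L, s, v) \<Rightarrow> do {
          (dist, pred) \<leftarrow> dijkstra_tm adj k s;
          (_, path) \<leftarrow> foldM (\<lambda>(cur, acc) _. prim (pred ! cur, pred ! cur # acc)) [0..<L - 1] (v, [v]);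
          ret path }) }"

definition egrmr :: "complex list \<Rightarrow> complex list \<Rightarrow> real \<Rightarrow> complex list tm" where
  "egrmr P X eps = do {
     (T, S) \<leftarrow> step1 P X eps;
     let k = length S;
     adj \<leftarrow> forM (\<lambda>i. forM (\<lambda>j. edge_tm T S eps i j) [0..<k]) [0..<k];
     C \<leftarrow> cycle_tm adj k;
     forM (\<lambda>i. prim (S ! i)) C }"

definition egrmr_cost :: "complex list \<Rightarrow> complex list \<Rightarrow> real \<Rightarrow> nat" where
  "egrmr_cost P X eps = snd (egrmr P X eps)"

end

theory Submission imports Defs begin
lemma tbind_eq[simp]: "tbind m f = (fst (f (fst m)), snd m + snd (f (fst m)))"
  by (cases m; cases "f (fst m)") (auto simp: tbind_def)
lemma ret_simps[simp]: "fst (ret x) = x" "snd (ret x) = 0" by (auto simp: ret_def)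
lemma prim_simps[simp]: "fst (prim x) = x" "snd (prim x) = 1" by (auto simp: prim_def)

lemma foldM_cost:
  "(\<And>b x. x \<in> set xs \<Longrightarrow> snd (f b x) \<le> c) \<Longrightarrow> snd (foldM f xs b) \<le> length xs * (c+1)"
proof (induction xs arbitrary: b)
  case Nil then show ?case by simp
next
  case (Cons x xs)
  have "snd (f b x) \<le> c" using Cons.prems by simp
  moreover have "snd (foldM f xs (fst (f b x))) \<le> length xs * (c+1)" using Cons by simp
  ultimately show ?case by simp
qed

lemma foldM_inv:
  "I b i \<Longrightarrow> (\<And>b x i. I b i \<Longrightarrow> x \<in> set xs \<Longrightarrow> I (fst (f b x)) (Suc i))
   \<Longrightarrow> I (fst (foldM f xs b)) (i + length xs)"
proof (induction xs arbitrary: b i)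
  case Nil then show ?case by simp
next
  case (Cons x xs)
  have "I (fst (f b x)) (Suc i)" using Cons.prems by simp
  then have "I (fst (foldM f xs (fst (f b x)))) (Suc i + length xs)"
    using Cons.IH Cons.prems(2) by (metis list.set_intros(2))
  then show ?case by simp
qed

lemma foldM_inv0:
  "I b \<Longrightarrow> (\<And>b x. I b \<Longrightarrow> x \<in> set xs \<Longrightarrow> I (fst (f b x))) \<Longrightarrow> I (fst (foldM f xs b))"
  using foldM_inv[where I="\<lambda>b i. I b" and i=0] by blast

lemma forM_fst_gen:
  "fst (foldM (\<lambda>acc x. tbind (f x) (\<lambda>y. ret (acc @ [y]))) xs acc) = acc @ map (\<lambda>x. fst (f x)) xs"
  by (induction xs arbitrary: acc) auto

lemma forM_fst[simp]: "fst (forM f xs) = map (\<lambda>x. fst (f x)) xs"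
  unfolding forM_def using forM_fst_gen[of f xs "[]"] by simp

lemma forM_cost: "(\<And>x. x \<in> set xs \<Longrightarrow> snd (f x) \<le> c) \<Longrightarrow> snd (forM f xs) \<le> length xs * (c+1)"
  unfolding forM_def by (rule foldM_cost) auto

lemma anyM_cost: "(\<And>x. x \<in> set xs \<Longrightarrow> snd (p x) \<le> c) \<Longrightarrow> snd (anyM p xs) \<le> length xs * (c+1)"
  unfolding anyM_def by (rule foldM_cost) auto

lemma ins_tm_props: "length (fst (ins_tm k x ys)) = Suc (length ys) \<and> snd (ins_tm k x ys) \<le> length ys"
  by (induction ys) auto

lemma sort_gen: "length (fst (foldM (\<lambda>acc x. ins_tm k x acc) xs acc)) = length acc + length xs \<and>
   snd (foldM (\<lambda>acc x. ins_tm k x acc) xs acc) \<le> length xs * (length xs + length acc + 1)"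
proof (induction xs arbitrary: acc)
  case Nil then show ?case by simp
next
  case (Cons x xs)
  let ?a = "fst (ins_tm k x acc)"
  have 1: "length ?a = Suc (length acc)" "snd (ins_tm k x acc) \<le> length acc" using ins_tm_props[of k x acc] by blast+
  have 2: "length (fst (foldM (\<lambda>acc x. ins_tm k x acc) xs ?a)) = length ?a + length xs"
    "snd (foldM (\<lambda>acc x. ins_tm k x acc) xs ?a) \<le> length xs * (length xs + length ?a + 1)"
    using Cons.IH by blast+
  show ?case using 1 2 by (simp add: algebra_simps)
qed

lemma sort_tm_props: "length (fst (sort_tm k xs)) = length xs \<and> snd (sort_tm k xs) \<le> length xs * (length xs + 1)"
  unfolding sort_tm_def using sort_gen[of k xs "[]"] by simp

definition extra_f where
 "extra_f T xs m eps = (\<lambda>acc p. do {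
                 inX \<leftarrow> anyM (\<lambda>t. prim (t = p)) T;
                 if inX then ret acc else do {
                   close \<leftarrow> anyM (\<lambda>i. prim (p \<bullet> (xs ! i) \<ge> (1 - eps) * ((T ! i) \<bullet> (xs ! i)))) [0..<m];
                   ret (if close then acc @ [p] else acc) } })"

lemma step1_alt: "step1 P X eps = do {
     T \<leftarrow> sort_tm polar X;
     let m = length T;
     xs \<leftarrow> forM (\<lambda>i. prim (xstar_strict (T ! i) (T ! ((i + 1) mod m)))) [0..<m];
     extra \<leftarrow> foldM (extra_f T xs m eps) P [];
     S \<leftarrow> sort_tm polar (T @ extra);
     ret (T, S) }"
  unfolding step1_def extra_f_def by simp

lemma extra_cost: "snd (foldM (extra_f T xs m eps) P acc) \<le> length P * (2 * length T + 2 * m + 1)"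
proof -
  have "snd (foldM (extra_f T xs m eps) P acc) \<le> length P * ((2 * length T + 2 * m) + 1)"
  proof (rule foldM_cost)
    fix b x
    have a1: "snd (anyM (\<lambda>t. prim (t = x)) T) \<le> length T * (1+1)" by (rule anyM_cost) simp
    have a2: "snd (anyM (\<lambda>i. prim (x \<bullet> (xs ! i) \<ge> (1 - eps) * ((T ! i) \<bullet> (xs ! i)))) [0..<m]) \<le> m * (1+1)"
      using anyM_cost[of "[0..<m]" "\<lambda>i. prim (x \<bullet> (xs ! i) \<ge> (1 - eps) * ((T ! i) \<bullet> (xs ! i)))" 1] by simp
    show "snd (extra_f T xs m eps b x) \<le> 2 * length T + 2 * m"
      unfolding extra_f_def using a1 a2 by auto
  qed
  then show ?thesis by simp
qed

lemma extra_len: "length (fst (foldM (extra_f T xs m eps) P [])) \<le> length P"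
proof -
  have "(\<lambda>b i. length b \<le> i) (fst (foldM (extra_f T xs m eps) P [])) (0 + length P)"
    by (rule foldM_inv) (auto simp: extra_f_def)
  then show ?thesis by simp
qed

lemma step1_props:
  fixes P X :: "complex list"
  defines "m \<equiv> length X" and "n \<equiv> length P"
  shows "length (fst (fst (step1 P X eps))) = m \<and> length (snd (fst (step1 P X eps))) \<le> m + n \<and>
    snd (step1 P X eps) \<le> m*(m+1) + m*2 + n*(4*m+1) + (m+n)*(m+n+1)"
proof -
  define T where "T = fst (sort_tm polar X)"
  have T: "length T = m" "snd (sort_tm polar X) \<le> m*(m+1)" using sort_tm_props[of polar X] by (auto simp: T_def m_def)
  define xs where "xs = fst (forM (\<lambda>i. prim (xstar_strict (T ! i) (T ! (Suc i mod m)))) [0..<m])"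
  have xs: "snd (forM (\<lambda>i. prim (xstar_strict (T ! i) (T ! (Suc i mod m)))) [0..<m]) \<le> m * 2"
    using forM_cost[of "[0..<m]" "(\<lambda>i. prim (xstar_strict (T ! i) (T ! (Suc i mod m))))" 1] by simp
  define E where "E = fst (foldM (extra_f T xs m eps) P [])"
  have E: "length E \<le> n" "snd (foldM (extra_f T xs m eps) P []) \<le> n * (4 * m + 1)"
    using extra_len[of T xs m eps P] extra_cost[of T xs m eps P "[]"] T by (auto simp: E_def n_def)
  define S where "S = fst (sort_tm polar (T @ E))"
  have S: "length S \<le> m + n" "snd (sort_tm polar (T @ E)) \<le> (m+n)*(m+n+1)"
  proof -
    have l: "length (T @ E) \<le> m + n" using T E by simp
    have "length (T @ E) * (length (T @ E) + 1) \<le> (m+n)*(m+n+1)"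
      using l by (intro mult_le_mono) auto
    then show "length S \<le> m + n" "snd (sort_tm polar (T @ E)) \<le> (m+n)*(m+n+1)"
      using sort_tm_props[of polar "T @ E"] l unfolding S_def by linarith+
  qed
  show ?thesis
    unfolding step1_alt using T xs E S
    by (simp del: forM_fst add: Let_def T_def[symmetric] xs_def[symmetric] E_def[symmetric] S_def[symmetric])
qed

lemma lval_cost: "snd (lval_tm T a b) \<le> 1 + length T * 3"
proof -
  have "snd (foldM (\<lambda>acc t. do {
             inR \<leftarrow> prim (ccw_angle a t \<le> ccw_angle a b);
             if inR then prim (Some (case acc of
                                  None \<Rightarrow> 1 - (a \<bullet> xst) / (t \<bullet> xst)
                                | Some v \<Rightarrow> max v (1 - (a \<bullet> xst) / (t \<bullet> xst))))
             else ret acc }) T None) \<le> length T * (2 + 1)" for xst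
    by (rule foldM_cost) auto
  then show ?thesis unfolding lval_tm_def by simp
qed

lemma edge_cost: "snd (edge_tm T S eps i j) \<le> 4 + length T * 3"
  using lval_cost[of T "S ! i" "S ! j"] unfolding edge_tm_def by auto

definition bnd :: "nat option list \<Rightarrow> nat \<Rightarrow> bool" where
  "bnd d B \<longleftrightarrow> (\<forall>x\<in>set d. \<forall>y. x = Some y \<longrightarrow> y \<le> B)"

definition U :: nat where "U = the (None :: nat option)"

lemma bnd_the: "bnd d B \<Longrightarrow> u < length d \<Longrightarrow> the (d ! u) \<le> U + B"
  unfolding bnd_def U_def by (cases "d ! u") (auto, metis nth_mem trans_le_add2)

lemma bnd_mono: "bnd d B \<Longrightarrow> B \<le> B' \<Longrightarrow> bnd d B'"
  unfolding bnd_def by force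

lemma bnd_update: "bnd d B \<Longrightarrow> y \<le> B \<Longrightarrow> bnd (d[v := Some y]) B"
  unfolding bnd_def using set_update_subset_insert[of d v "Some y"] by fastforce

definition sel_f :: "bool list \<Rightarrow> nat option list \<Rightarrow> nat option \<Rightarrow> nat \<Rightarrow> nat option tm" where
  "sel_f vis dst = (\<lambda>best v. prim (
                  if \<not> vis ! v \<and> dst ! v \<noteq> None \<and>
                     (case best of None \<Rightarrow> True | Some w \<Rightarrow> the (dst ! v) < the (dst ! w))
                  then Some v else best))"

definition relax_f :: "bool list list \<Rightarrow> nat \<Rightarrow> bool list \<Rightarrow> nat option list \<times> nat list \<Rightarrow> nat \<Rightarrow> (nat option list \<times> nat list) tm" where
  "relax_f adj u vis' = (\<lambda>(d, pr) v. prim (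
                   if adj ! u ! v \<and> \<not> vis' ! v \<and>
                      (case d ! v of None \<Rightarrow> True | Some dv \<Rightarrow> the (d ! u) + 1 < dv)
                   then (d[v := Some (the (d ! u) + 1)], pr[v := u]) else (d, pr)))"

definition main_f :: "bool list list \<Rightarrow> nat \<Rightarrow> nat option list \<times> nat list \<times> bool list \<Rightarrow> nat \<Rightarrow> (nat option list \<times> nat list \<times> bool list) tm" where
  "main_f adj k = (\<lambda>(dist, pred, vis) _. do {
         u \<leftarrow> foldM (sel_f vis dist) [0..<k] None;
         (case u of
            None \<Rightarrow> ret (dist, pred, vis)
          | Some u \<Rightarrow> do {
              vis' \<leftarrow> prim (vis[u := True]);
              (dist', pred') \<leftarrow> foldM (relax_f adj u vis') [0..<k] (dist, pred);
              ret (dist', pred', vis') }) })"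

lemma dijkstra_alt: "dijkstra_tm adj k s = do {
     dist0 \<leftarrow> forM (\<lambda>v. prim (if v = s then Some 0 else None)) [0..<k];
     pred0 \<leftarrow> forM (\<lambda>v. prim s) [0..<k];
     vis0 \<leftarrow> forM (\<lambda>v. prim False) [0..<k];
     (dist, pred, vis) \<leftarrow> foldM (main_f adj k) [0..<k] (dist0, pred0, vis0);
     ret (dist, pred) }"
  unfolding dijkstra_tm_def main_f_def sel_f_def relax_f_def by (rule refl)

lemma main_f_cost: "snd (main_f adj k st x) \<le> 4 * k + 1"
proof -
  have a: "snd (foldM (sel_f vis dst) [0..<k] None) \<le> k * (1 + 1)" for vis dst
    by (rule order_trans[OF foldM_cost[where c=1]]) (auto simp: sel_f_def)
  have b: "snd (foldM (relax_f adj u vis') [0..<k] dp) \<le> k * (1 + 1)" for u vis' dp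
    by (rule order_trans[OF foldM_cost[where c=1]]) (auto simp: relax_f_def split: prod.splits)
  show ?thesis
    using a b unfolding main_f_def
    by (cases st) (auto simp: split_beta split: option.splits
        intro!: order_trans[OF add_le_mono[OF a b]] order_trans[OF a])
qed

lemma dijkstra_cost: "snd (dijkstra_tm adj k s) \<le> 6 * k + k * (4 * k + 2)"
proof -
  have m: "snd (foldM (main_f adj k) [0..<k] st) \<le> k * (4 * k + 1 + 1)" for st
    by (rule order_trans[OF foldM_cost[where c="4*k+1"]]) (use main_f_cost in auto)
  have f: "snd (forM f [0..<k]) \<le> k * (1 + 1)" if "\<And>x. snd (f x) = 1" for f :: "nat \<Rightarrow> 'a tm"
    using forM_cost[of "[0..<k]" f 1] that by simp
  show ?thesis unfolding dijkstra_alt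
    using m[of "(fst (forM (\<lambda>v. prim (if v = s then Some (0::nat) else None)) [0..<k]), fst (forM (\<lambda>v. prim s) [0..<k]), fst (forM (\<lambda>v. prim False) [0..<k]))"] f[of "\<lambda>v. prim (if v = s then Some (0::nat) else None)"] f[of "\<lambda>v. prim s"] f[of "\<lambda>v. prim False"]
    by (simp add: split_beta del: forM_fst)
qed

lemma relax_inv:
  assumes "u < k" "length d = k" "bnd d B"
  shows "length (fst (fst (foldM (relax_f adj u vis') [0..<k] (d, pr)))) = k \<and>
         bnd (fst (fst (foldM (relax_f adj u vis') [0..<k] (d, pr)))) (B + k * (U + 1))"
proof -
  let ?I = "\<lambda>(st :: nat option list \<times> nat list) j. length (fst st) = k \<and> bnd (fst st) (B + j * (U + 1))"
  have "?I (fst (foldM (relax_f adj u vis') [0..<k] (d, pr))) (0 + length [0..<k])"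
  proof (rule foldM_inv)
    show "?I (d, pr) 0" using assms by simp
  next
    fix st x j assume I: "?I st j"
    obtain dd pp where st: "st = (dd, pp)" by (cases st)
    have l: "length dd = k" and b: "bnd dd (B + j * (U + 1))" using I st by auto
    have t: "the (dd ! u) \<le> U + (B + j * (U + 1))" using bnd_the[OF b] l assms(1) by simp
    have b2: "bnd dd (B + Suc j * (U + 1))" by (rule bnd_mono[OF b]) simp
    have "bnd (dd[x := Some (the (dd ! u) + 1)]) (B + Suc j * (U + 1))"
      by (rule bnd_update[OF b2]) (use t in simp)
    then show "?I (fst (relax_f adj u vis' st x)) (Suc j)"
      unfolding relax_f_def st using l b2 by auto
  qed
  then show ?thesis by simp
qed

lemma sel_range: "\<forall>v. fst (foldM (sel_f vis dst) [0..<k] None) = Some v \<longrightarrow> v < k"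
proof -
  have "(\<lambda>b. \<forall>v. b = Some v \<longrightarrow> v < k) (fst (foldM (sel_f vis dst) [0..<k] None))"
    by (rule foldM_inv0) (auto simp: sel_f_def)
  then show ?thesis by simp
qed

lemma dijkstra_val:
  "length (fst (fst (dijkstra_tm adj k s))) = k \<and> bnd (fst (fst (dijkstra_tm adj k s))) (k * k * (U + 1))"
proof -
  let ?I = "\<lambda>(st :: nat option list \<times> nat list \<times> bool list) i. length (fst st) = k \<and> bnd (fst st) (i * k * (U + 1))"
  let ?d0 = "map (\<lambda>v. if v = s then Some (0::nat) else None) [0..<k]"
  have "?I (fst (foldM (main_f adj k) [0..<k] (?d0, p0, v0))) (0 + length [0..<k])" for p0 v0
  proof (rule foldM_inv)
    show "?I (?d0, p0, v0) 0" by (auto simp: bnd_def)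
  next
    fix st x i assume I: "?I st i"
    obtain dd pp vv where st: "st = (dd, pp, vv)" by (cases st)
    have l: "length dd = k" and b: "bnd dd (i * k * (U + 1))" using I st by auto
    show "?I (fst (main_f adj k st x)) (Suc i)"
    proof (cases "fst (foldM (sel_f vv dd) [0..<k] None)")
      case None
      have "bnd dd (Suc i * k * (U + 1))" by (rule bnd_mono[OF b]) (intro mult_le_mono; simp)
      then show ?thesis unfolding main_f_def st using None l by (simp add: split_beta)
    next
      case (Some u)
      then have u: "u < k" using sel_range by blast
      have r: "length (fst (fst (foldM (relax_f adj u (vv[u := True])) [0..<k] (dd, pp)))) = k \<and>
         bnd (fst (fst (foldM (relax_f adj u (vv[u := True])) [0..<k] (dd, pp)))) (i * k * (U + 1) + k * (U + 1))"
        by (rule relax_inv[OF u l b])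
      have e: "i * k * (U + 1) + k * (U + 1) = Suc i * k * (U + 1)" by (simp add: algebra_simps)
      show ?thesis unfolding main_f_def st using Some r[unfolded e] by (simp add: split_beta)
    qed
  qed
  then show ?thesis unfolding dijkstra_alt by (simp add: split_beta)
qed

definition cyc_inner :: "bool list list \<Rightarrow> nat \<Rightarrow> nat option list \<Rightarrow> (nat \<times> nat \<times> nat) option \<Rightarrow> nat \<Rightarrow> (nat \<times> nat \<times> nat) option tm" where
  "cyc_inner adj s dst = (\<lambda>b v. prim (case dst ! v of
                           None \<Rightarrow> b
                         | Some d \<Rightarrow> if adj ! v ! s \<and> (case b of None \<Rightarrow> True | Some (L, _, _) \<Rightarrow> d + 1 < L)
                                     then Some (d + 1, s, v) else b))"

definition cyc_f :: "bool list list \<Rightarrow> nat \<Rightarrow> (nat \<times> nat \<times> nat) option \<Rightarrow> nat \<Rightarrow> (nat \<times> nat \<times> nat) option tm" where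
  "cyc_f adj k = (\<lambda>best s. do {
                (dst, pred) \<leftarrow> dijkstra_tm adj k s;
                foldM (cyc_inner adj s dst) [0..<k] best })"

definition path_f :: "nat list \<Rightarrow> nat \<times> nat list \<Rightarrow> nat \<Rightarrow> (nat \<times> nat list) tm" where
  "path_f pred = (\<lambda>(cur, acc) _. prim (pred ! cur, pred ! cur # acc))"

lemma cycle_alt: "cycle_tm adj k = do {
     best \<leftarrow> foldM (cyc_f adj k) [0..<k] None;
     (case best of
        None \<Rightarrow> ret []
      | Some (L, s, v) \<Rightarrow> do {
          (dst, pred) \<leftarrow> dijkstra_tm adj k s;
          (_, path) \<leftarrow> foldM (path_f pred) [0..<L - 1] (v, [v]);
          ret path }) }"
  unfolding cycle_tm_def cyc_f_def cyc_inner_def path_f_def by (rule refl)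

lemma cyc_f_cost: "snd (cyc_f adj k b s) \<le> (6 * k + k * (4 * k + 2)) + 2 * k"
proof -
  have h: "snd (foldM (cyc_inner adj s dst) [0..<k] b) \<le> k * (1 + 1)" for dst b
    by (rule order_trans[OF foldM_cost[where c=1]]) (auto simp: cyc_inner_def)
  show ?thesis unfolding cyc_f_def using dijkstra_cost[of adj k s] h[of "fst (fst (dijkstra_tm adj k s))" b]
    by (simp add: split_beta)
qed

lemma best_inv: "\<forall>L s v. fst (foldM (cyc_f adj k) [0..<k] None) = Some (L, s, v) \<longrightarrow> L \<le> k * k * (U + 1) + 1"
proof -
  let ?J = "\<lambda>(b :: (nat \<times> nat \<times> nat) option). \<forall>L s v. b = Some (L, s, v) \<longrightarrow> L \<le> k * k * (U + 1) + 1"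
  have "?J (fst (foldM (cyc_f adj k) [0..<k] None))"
  proof (rule foldM_inv0)
    show "?J None" by simp
  next
    fix b s assume J: "?J b"
    define dst where "dst = fst (fst (dijkstra_tm adj k s))"
    have dv: "length dst = k" "bnd dst (k * k * (U + 1))" using dijkstra_val[of adj k s] by (auto simp: dst_def)
    have "?J (fst (foldM (cyc_inner adj s dst) [0..<k] b))"
    proof (rule foldM_inv0)
      show "?J b" by (rule J)
    next
      fix b' v assume J': "?J b'" and v: "v \<in> set [0..<k]"
      then have "dst ! v \<in> set dst" using dv by simp
      then have "\<forall>d. dst ! v = Some d \<longrightarrow> d \<le> k * k * (U + 1)" using dv(2) unfolding bnd_def by blast
      then show "?J (fst (cyc_inner adj s dst b' v))"
        using J' unfolding cyc_inner_def by (auto split: option.splits)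
    qed
    then show "?J (fst (cyc_f adj k b s))" unfolding cyc_f_def dst_def by (simp add: split_beta)
  qed
  then show ?thesis .
qed

lemma path_props: "length (snd (fst (foldM (path_f pred) xs (v, [v])))) = Suc (length xs) \<and>
   snd (foldM (path_f pred) xs (v, [v])) \<le> length xs * 2"
proof
  have "(\<lambda>st i. length (snd st) = Suc i) (fst (foldM (path_f pred) xs (v, [v]))) (0 + length xs)"
    by (rule foldM_inv) (auto simp: path_f_def split_beta)
  then show "length (snd (fst (foldM (path_f pred) xs (v, [v])))) = Suc (length xs)" by simp
  show "snd (foldM (path_f pred) xs (v, [v])) \<le> length xs * 2"
    using foldM_cost[of xs "path_f pred" 1 "(v, [v])"] by (simp add: path_f_def split_beta)
qed

lemma cycle_props:
  "length (fst (cycle_tm adj k)) \<le> k * k * (U + 1) + 1 \<and>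
   snd (cycle_tm adj k) \<le> k * ((6 * k + k * (4 * k + 2)) + 2 * k + 1) + (6 * k + k * (4 * k + 2)) + 2 * (k * k * (U + 1))"
proof -
  define best where "best = fst (foldM (cyc_f adj k) [0..<k] None)"
  have c1: "snd (foldM (cyc_f adj k) [0..<k] None) \<le> k * ((6 * k + k * (4 * k + 2)) + 2 * k + 1)"
    using foldM_cost[of "[0..<k]" "cyc_f adj k" "(6 * k + k * (4 * k + 2)) + 2 * k" None] cyc_f_cost by simp
  show ?thesis
  proof (cases best)
    case None
    then show ?thesis unfolding cycle_alt using c1 by (simp add: best_def[symmetric])
  next
    case (Some t)
    then obtain L s v where t: "best = Some (L, s, v)" by (cases t) auto
    have L: "L \<le> k * k * (U + 1) + 1" using best_inv t unfolding best_def by blast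
    define pred where "pred = snd (fst (dijkstra_tm adj k s))"
    have p: "length (snd (fst (foldM (path_f pred) [0..<L - 1] (v, [v])))) \<le> k * k * (U + 1) + 1"
      "snd (foldM (path_f pred) [0..<L - 1] (v, [v])) \<le> 2 * (k * k * (U + 1))"
      using path_props[of pred "[0..<L - 1]" v] L by auto
    show ?thesis unfolding cycle_alt using c1 p dijkstra_cost[of adj k s]
      by (simp add: best_def[symmetric] t split_beta pred_def[symmetric])
  qed
qed

lemma egrmr_bound:
  fixes P X :: "complex list"
  defines "K \<equiv> length X + length P"
  shows "egrmr_cost P X eps \<le> (K*(K+1) + K*2 + K*(4*K+1) + K*(K+1)) + K*(K*(4+K*3+1)+1)
     + (K*((6*K + K*(4*K+2)) + 2*K + 1) + (6*K + K*(4*K+2)) + 2*(K*K*(U+1)))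
     + 2*(K*K*(U+1)+1)"
proof -
  define m where "m = length X"
  define n where "n = length P"
  have s1: "length (fst (fst (step1 P X eps))) = m" "length (snd (fst (step1 P X eps))) \<le> m + n"
    "snd (step1 P X eps) \<le> m*(m+1) + m*2 + n*(4*m+1) + (m+n)*(m+n+1)"
    using step1_props[of P X eps] unfolding m_def n_def by auto
  define T where "T = fst (fst (step1 P X eps))"
  define S where "S = snd (fst (step1 P X eps))"
  define k where "k = length S"
  have mK: "m \<le> K" and nK: "n \<le> K" and kK: "k \<le> K" and mnK: "m + n \<le> K"
    using s1 unfolding K_def m_def n_def k_def S_def by auto
  define adjf where "adjf = (\<lambda>i. forM (\<lambda>j. edge_tm T S eps i j) [0..<k])"
  have ec: "snd (adjf i) \<le> k * (4 + m * 3 + 1)" for i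
    unfolding adjf_def using forM_cost[of "[0..<k]" "\<lambda>j. edge_tm T S eps i j" "4 + m * 3"] edge_cost[of T S eps i]
      s1(1) unfolding T_def by simp
  have ac: "snd (forM adjf [0..<k]) \<le> k * (k * (4 + m * 3 + 1) + 1)"
    using forM_cost[of "[0..<k]" adjf "k * (4 + m * 3 + 1)"] ec by simp
  define adj where "adj = fst (forM adjf [0..<k])"
  have cy: "length (fst (cycle_tm adj k)) \<le> k * k * (U + 1) + 1"
    "snd (cycle_tm adj k) \<le> k * ((6 * k + k * (4 * k + 2)) + 2 * k + 1) + (6 * k + k * (4 * k + 2)) + 2 * (k * k * (U + 1))"
    using cycle_props[of adj k] by auto
  define C where "C = fst (cycle_tm adj k)"
  have fc: "snd (forM (\<lambda>i. prim (S ! i)) C) \<le> length C * (1 + 1)"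
    by (rule forM_cost) simp
  have eq: "egrmr_cost P X eps = snd (step1 P X eps) + snd (forM adjf [0..<k]) + snd (cycle_tm adj k)
      + snd (forM (\<lambda>i. prim (S ! i)) C)"
    unfolding egrmr_cost_def egrmr_def
    by (simp add: split_beta Let_def T_def[symmetric] S_def[symmetric] k_def[symmetric] adjf_def[symmetric]
        adj_def[symmetric] C_def[symmetric] del: forM_fst)
  have b1: "snd (step1 P X eps) \<le> K*(K+1) + K*2 + K*(4*K+1) + K*(K+1)"
    apply (rule order_trans[OF s1(3)]) apply (intro add_mono mult_le_mono order_refl)
    using mK nK mnK by simp_all
  have b2: "snd (forM adjf [0..<k]) \<le> K*(K*(4+K*3+1)+1)"
    apply (rule order_trans[OF ac]) apply (intro add_mono mult_le_mono order_refl)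
    using mK kK by simp_all
  have b3: "snd (cycle_tm adj k) \<le> K*((6*K + K*(4*K+2)) + 2*K + 1) + (6*K + K*(4*K+2)) + 2*(K*K*(U+1))"
    apply (rule order_trans[OF cy(2)]) apply (intro add_mono mult_le_mono order_refl)
    using kK by simp_all
  have b4: "snd (forM (\<lambda>i. prim (S ! i)) C) \<le> 2*(K*K*(U+1)+1)"
  proof -
    have "length C \<le> K*K*(U+1)+1" unfolding C_def
      apply (rule order_trans[OF cy(1)]) apply (intro add_mono mult_le_mono order_refl)
      using kK by simp_all
    then show ?thesis using fc by simp
  qed
  show ?thesis unfolding eq using b1 b2 b3 b4 by linarith
qed

lemma poly_bound:
  fixes K :: nat assumes "1 \<le> K"
  shows "(K*(K+1) + K*2 + K*(4*K+1) + K*(K+1)) + K*(K*(4+K*3+1)+1)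
     + (K*((6*K + K*(4*K+2)) + 2*K + 1) + (6*K + K*(4*K+2)) + 2*(K*K*(U+1)))
     + 2*(K*K*(U+1)+1) \<le> (53 + 4*U) * (K*K*K)"
proof -
  have a: "K \<le> K*K*K" and b: "K*K \<le> K*K*K" using assms by simp_all
  have c: "1 \<le> K*K*K" using assms a by linarith
  have d: "K*K*U \<le> K*K*K*U" using assms by simp
  have key: "2 + 15*K + 4*(K*K*U) + 29*(K*K) \<le> 4*(K*K*K*U) + 46*(K*K*K)" using a b c d by linarith
  show ?thesis using key by (simp add: algebra_simps)
qed

theorem theorem3:
  "\<exists>C::real. \<forall>(P::complex list) (X::complex list) (eps::real).
     distinct P \<longrightarrow> standing_condition (set P) \<longrightarrow>
     distinct X \<longrightarrow> set X = {p. p extreme_point_of (convex hull (set P))} \<longrightarrow>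
     0 < eps \<longrightarrow> eps < 1 \<longrightarrow>
     real (egrmr_cost P X eps) \<le> C * real (length P) ^ 3"
proof (intro exI allI impI)
  fix P X :: "complex list" and eps :: real
  assume dX: "distinct X" and sX: "set X = {p. p extreme_point_of (convex hull (set P))}"
  have sub: "set X \<subseteq> set P" using sX extreme_point_of_convex_hull by blast
  have mn: "length X \<le> length P"
    using distinct_card[OF dX] card_mono[OF _ sub] card_length[of P] by simp
  show "real (egrmr_cost P X eps) \<le> real (8 * (53 + 4 * U)) * real (length P) ^ 3"
  proof (cases "P = []")
    case True
    then have "X = []" using sub by simp
    then have "egrmr_cost P X eps = 0" using True
      by (simp add: egrmr_cost_def egrmr_def step1_def sort_tm_def forM_def cycle_tm_def split_beta Let_def)
    then show ?thesis by simp
  next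
    case False
    define n where "n = length P"
    define K where "K = length X + length P"
    have n1: "1 \<le> n" using False unfolding n_def by (cases P) auto
    have K1: "1 \<le> K" "K \<le> 2 * n" using n1 mn unfolding K_def n_def by auto
    have "egrmr_cost P X eps \<le> (53 + 4*U) * (K*K*K)"
      using egrmr_bound[of P X eps, folded K_def] poly_bound[OF K1(1)] by linarith
    also have "\<dots> \<le> (53 + 4*U) * ((2*n)*(2*n)*(2*n))"
      using K1(2) by (intro mult_le_mono order_refl) simp_all
    also have "\<dots> = 8 * (53 + 4*U) * n^3" by (simp add: power3_eq_cube algebra_simps)
    finally have "real (egrmr_cost P X eps) \<le> real (8 * (53 + 4*U) * n^3)" by linarith
    then show ?thesis unfolding n_def by simp
  qed
qed

end
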